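(* For every entire function $f$ on $\mathbb{C}$, the vector-valued holomorphic function $\Phi=\Phi_f$ on $\mathbb{C}^k$ satisfies the differential system $$(-1)^{k+h}\frac{\partial\Phi}{\partial s_h}(s)=\frac{\partial (A(s)^{k-h}\Phi)}{\partial s_k}(s)\qquad\forall s\in\mathbb{C}^k,\ \forall h\in[1,k-1].\qquad(@)$$ Moreover, this system is integrable, in the sense that for any holomorphic solution $\Phi$ of $(@)$ and any $h,j\in[1,k-1]$, computing $\frac{\partial^2\Phi}{\partial s_j\partial s_h}$ by applying $(@)$ twice gives $$(-1)^{h+j}\frac{\partial^2\Phi}{\partial s_j\partial s_h}=\frac{\partial^2}{\partial s_k^2}\big(A(s)^{2k-h-j}\Phi\big),$$ which is symmetric in $(h,j)$; and if $\Phi$ is a holomorphic solution of $(@)$, then so is $A(s)\Phi$.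
   Context: Fix an integer $k\ge 2$. Use coordinates $s=(s_1,\dots,s_k)$ on $\mathbb{C}^k$, set $s_0:=1$ and $P_s(z):=\sum_{h=0}^k(-1)^hs_hz^{k-h}$. Let $E(z):=(1,z,\dots,z^{k-1})^T$. For an entire function $f$, define $\Phi_f(s):=\frac{1}{2i\pi}\int_{|\zeta|=R}\frac{f(\zeta)E(\zeta)\,d\zeta}{P_s(\zeta)}$, with $R$ large enough that all roots of $P_s$ lie in $\{|\zeta|<R\}$ (independent of such $R$; holomorphic in $s$). $A(s)$ is the $(k,k)$ companion matrix of $P_s$: its entries are $A_{i,i+1}=1$ for $i\in[1,k-1]$, its last row is $A_{k,j}=(-1)^{k-j}s_{k+1-j}$ for $j\in[1,k]$ (i.e. $((-1)^{k-1}s_k,\dots,(-1)^{h-1}s_h,\dots,s_1)$), and all other entries are $0$. *)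

theory Defs
  imports "HOL-Complex_Analysis.Complex_Analysis"
begin

text \<open>Points s of C^k are functions nat => complex, of which only the coordinates
  s 1, ..., s k matter.  Vectors of C^k are functions nat => complex whose
  components 1..k matter; (k,k) matrices are functions nat => nat => complex
  with indices in 1..k.  nat => complex carries the product topology.\<close>

definition coeffs_s :: "(nat \<Rightarrow> complex) \<Rightarrow> nat \<Rightarrow> complex" where
  "coeffs_s s h = (if h = 0 then 1 else s h)"

definition Ps :: "nat \<Rightarrow> (nat \<Rightarrow> complex) \<Rightarrow> complex \<Rightarrow> complex" where
  "Ps k s z = (\<Sum>h=0..k. (-1)^h * coeffs_s s h * z^(k-h))"

text \<open>A radius such that all roots of P_s lie in the open disc (Cauchy bound).\<close>
definition radius_s :: "nat \<Rightarrow> (nat \<Rightarrow> complex) \<Rightarrow> real" where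
  "radius_s k s = 1 + (\<Sum>h=1..k. cmod (s h))"

definition PhiF :: "nat \<Rightarrow> (complex \<Rightarrow> complex) \<Rightarrow> (nat \<Rightarrow> complex) \<Rightarrow> nat \<Rightarrow> complex" where
  "PhiF k f s i = (if i \<in> {1..k} then
      contour_integral (circlepath 0 (radius_s k s)) (\<lambda>\<zeta>. f \<zeta> * \<zeta>^(i-1) / Ps k s \<zeta>)
        / (2 * complex_of_real pi * \<i>)
     else 0)"

definition companion :: "nat \<Rightarrow> (nat \<Rightarrow> complex) \<Rightarrow> nat \<Rightarrow> nat \<Rightarrow> complex" where
  "companion k s i j =
     (if 1 \<le> i \<and> i \<le> k - 1 \<and> j = i + 1 then 1
      else if i = k \<and> 1 \<le> j \<and> j \<le> k then (-1)^(k-j) * s (k + 1 - j)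
      else 0)"

definition matvec :: "nat \<Rightarrow> (nat \<Rightarrow> nat \<Rightarrow> complex) \<Rightarrow> (nat \<Rightarrow> complex) \<Rightarrow> nat \<Rightarrow> complex" where
  "matvec k M v i = (\<Sum>j=1..k. M i j * v j)"

definition matpow_vec :: "nat \<Rightarrow> (nat \<Rightarrow> nat \<Rightarrow> complex) \<Rightarrow> nat \<Rightarrow> (nat \<Rightarrow> complex) \<Rightarrow> nat \<Rightarrow> complex" where
  "matpow_vec k M m v = (matvec k M ^^ m) v"

definition pderiv_s :: "nat \<Rightarrow> ((nat \<Rightarrow> complex) \<Rightarrow> nat \<Rightarrow> complex) \<Rightarrow> (nat \<Rightarrow> complex) \<Rightarrow> nat \<Rightarrow> complex" where
  "pderiv_s h F s i = deriv (\<lambda>t. F (s(h := t)) i) (s h)"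

text \<open>Holomorphic vector-valued function on C^k: depends only on s_1..s_k, and each
  component (1..k) is continuous and holomorphic in each variable separately
  (equivalent to joint holomorphy by Osgood's lemma).\<close>
definition holo_k :: "nat \<Rightarrow> ((nat \<Rightarrow> complex) \<Rightarrow> nat \<Rightarrow> complex) \<Rightarrow> bool" where
  "holo_k k \<Phi> \<longleftrightarrow>
     (\<forall>s s'. (\<forall>i\<in>{1..k}. s i = s' i) \<longrightarrow> (\<forall>i\<in>{1..k}. \<Phi> s i = \<Phi> s' i)) \<and>
     (\<forall>i\<in>{1..k}. continuous_on UNIV (\<lambda>s. \<Phi> s i)) \<and>
     (\<forall>s. \<forall>h\<in>{1..k}. \<forall>i\<in>{1..k}. (\<lambda>t. \<Phi> (s(h := t)) i) holomorphic_on UNIV)"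

definition solves_sys :: "nat \<Rightarrow> ((nat \<Rightarrow> complex) \<Rightarrow> nat \<Rightarrow> complex) \<Rightarrow> bool" where
  "solves_sys k \<Phi> \<longleftrightarrow>
     (\<forall>s. \<forall>h\<in>{1..k-1}. \<forall>i\<in>{1..k}.
        (-1)^(k+h) * pderiv_s h \<Phi> s i =
        pderiv_s k (\<lambda>s'. matpow_vec k (companion k s') (k-h) (\<Phi> s')) s i)"

end

theory Submission
  imports Defs
begin

definition hk :: "nat \<Rightarrow> ((nat \<Rightarrow> complex) \<Rightarrow> nat \<Rightarrow> complex) \<Rightarrow> bool" where
  "hk k G \<longleftrightarrow> (\<forall>i\<in>{1..k}. continuous_on UNIV (\<lambda>s. G s i)) \<and>
     (\<forall>s. \<forall>h\<in>{1..k}. \<forall>i\<in>{1..k}. (\<lambda>t. G (s(h := t)) i) holomorphic_on UNIV)"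

lemma companion_upd:
  assumes k2: "k \<ge> 2" and h: "h \<in> {1..k}" and j: "j \<in> {1..k}"
  shows "companion k (s(h:=t)) i j = companion k s i j +
     (if i = k \<and> j = k+1-h then (-1)^(h-1) else 0) * (t - s h)"
proof (cases "i = k")
  case True
  have "k+1-j = h \<longleftrightarrow> j = k+1-h" using h j by auto
  moreover have "j = k+1-h \<Longrightarrow> k - j = h - 1" using h j by auto
  ultimately show ?thesis using True k2 j
    by (auto simp: companion_def algebra_simps)
qed (auto simp: companion_def)

lemma companion_cont: "continuous_on UNIV (\<lambda>s. companion k s i j)"
proof -
  have "(\<lambda>s. companion k s i j) = (if 1 \<le> i \<and> i \<le> k - 1 \<and> j = i + 1 then (\<lambda>_. 1)
     else if i = k \<and> 1 \<le> j \<and> j \<le> k then (\<lambda>s. (-1)^(k-j) * s (k + 1 - j)) else (\<lambda>_. 0))"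
    by (auto simp: companion_def fun_eq_iff)
  then show ?thesis by (subst \<open>_ = _\<close>) (auto split: if_split intro!: continuous_intros)
qed

lemma companion_deriv:
  assumes k2: "k \<ge> 2" and h: "h \<in> {1..k}" and j: "j \<in> {1..k}"
  shows "((\<lambda>t. companion k (s(h:=t)) i j) has_field_derivative
     (if i = k \<and> j = k+1-h then (-1)^(h-1) else 0)) (at x)"
  unfolding companion_upd[OF assms]
  by (auto intro!: derivative_eq_intros)

lemma companion_holo:
  assumes k2: "k \<ge> 2" and h: "h \<in> {1..k}" and j: "j \<in> {1..k}"
  shows "(\<lambda>t. companion k (s(h:=t)) i j) holomorphic_on UNIV"
  unfolding companion_upd[OF assms] by (intro holomorphic_intros)

lemma matvec_cong:
  assumes "\<And>j. j \<in> {1..k} \<Longrightarrow> v j = w j"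
  shows "matvec k M v = matvec k M w"
  unfolding matvec_def using assms by (intro ext sum.cong) auto

lemma matpow_Suc: "matpow_vec k M (Suc m) v = matvec k M (matpow_vec k M m v)"
  by (simp add: matpow_vec_def)

lemma matpow_0: "matpow_vec k M 0 v = v"
  by (simp add: matpow_vec_def)

lemma matpow_add: "matpow_vec k M (m + n) v = matpow_vec k M m (matpow_vec k M n v)"
  by (simp add: matpow_vec_def funpow_add)

lemma hk_matvec:
  assumes k2: "k \<ge> 2" and G: "hk k G"
  shows "hk k (\<lambda>s. matvec k (companion k s) (G s))"
  unfolding hk_def matvec_def
proof (intro conjI ballI allI)
  fix i assume "i \<in> {1..k}"
  show "continuous_on UNIV (\<lambda>s. \<Sum>j = 1..k. companion k s i j * G s j)"
    using G unfolding hk_def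
    by (intro continuous_on_sum continuous_on_mult companion_cont) auto
next
  fix s h i assume h: "h \<in> {1..k}" and i: "i \<in> {1..k}"
  show "(\<lambda>t. \<Sum>j = 1..k. companion k (s(h := t)) i j * G (s(h := t)) j) holomorphic_on UNIV"
    using G h unfolding hk_def
    by (intro holomorphic_on_sum holomorphic_on_mult companion_holo[OF k2]) auto
qed

lemma hk_matpow:
  assumes k2: "k \<ge> 2" and G: "hk k G"
  shows "hk k (\<lambda>s. matpow_vec k (companion k s) m (G s))"
proof (induction m)
  case 0 then show ?case using G by (simp add: matpow_0)
next
  case (Suc m) then show ?case using hk_matvec[OF k2 Suc] by (simp add: matpow_Suc)
qed

lemma pderiv_matvec:
  assumes k2: "k \<ge> 2" and h: "h \<in> {1..k}" and G: "hk k G"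
  shows "pderiv_s h (\<lambda>s. matvec k (companion k s) (G s)) s i =
    (if i = k then (-1)^(h-1) * G s (k+1-h) else 0) + matvec k (companion k s) (pderiv_s h G s) i"
proof -
  have d: "((\<lambda>t. \<Sum>j = 1..k. companion k (s(h := t)) i j * G (s(h := t)) j) has_field_derivative
      (\<Sum>j = 1..k. (if i = k \<and> j = k+1-h then (-1)^(h-1) else 0) * G s j
         + companion k s i j * deriv (\<lambda>t. G (s(h := t)) j) (s h))) (at (s h))"
  proof (rule DERIV_sum)
    fix j assume j: "j \<in> {1..k}"
    have dG: "((\<lambda>t. G (s(h := t)) j) has_field_derivative deriv (\<lambda>t. G (s(h := t)) j) (s h)) (at (s h))"
      using G h j unfolding hk_def by (intro holomorphic_derivI[of _ UNIV]) auto
    show "((\<lambda>t. companion k (s(h := t)) i j * G (s(h := t)) j) has_field_derivative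
       ((if i = k \<and> j = k+1-h then (-1)^(h-1) else 0) * G s j
         + companion k s i j * deriv (\<lambda>t. G (s(h := t)) j) (s h))) (at (s h))"
      by (rule DERIV_cong[OF DERIV_mult[OF companion_deriv[OF k2 h j, of s i "s h"] dG]]) (simp add: mult.commute)
  qed
  have s1: "(\<Sum>j = 1..k. (if i = k \<and> j = k+1-h then (-1)^(h-1) else 0) * G s j) =
     (if i = k then (-1)^(h-1) * G s (k+1-h) else 0)"
  proof -
    have "(\<Sum>j = 1..k. (if i = k \<and> j = k+1-h then (-1)^(h-1) else 0) * G s j) =
      (\<Sum>j = 1..k. if j = k+1-h then (if i = k then (-1)^(h-1) * G s j else 0) else 0)"
      by (intro sum.cong) auto
    also have "\<dots> = (if i = k then (-1)^(h-1) * G s (k+1-h) else 0)"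
      using h by (subst sum.delta) auto
    finally show ?thesis .
  qed
  show ?thesis
    unfolding pderiv_s_def matvec_def
    using DERIV_imp_deriv[OF d] s1 by (simp add: sum.distrib)
qed

lemma matpow_shift:
  assumes k2: "k \<ge> 2" and "i \<ge> 1" "i + m \<le> k"
  shows "matpow_vec k (companion k s) m v i = v (i + m)"
  using assms(2,3)
proof (induction m arbitrary: v)
  case 0 then show ?case by (simp add: matpow_0)
next
  case (Suc m)
  have "matpow_vec k (companion k s) (Suc m) v i = matpow_vec k (companion k s) m (matvec k (companion k s) v) i"
    by (simp add: matpow_vec_def funpow_swap1)
  also have "\<dots> = matvec k (companion k s) v (i + m)" using Suc by simp
  also have "\<dots> = (\<Sum>j = 1..k. if j = i + m + 1 then v j else 0)"
    unfolding matvec_def using Suc.prems k2 by (intro sum.cong) (auto simp: companion_def)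
  also have "\<dots> = v (i + Suc m)" using Suc.prems by (subst sum.delta) auto
  finally show ?case .
qed

lemma sign_lemma:
  assumes "k \<ge> 2" "j \<ge> 1"
  shows "(-1::complex)^(k+j) * (-1)^(k-1) = (-1)^(j-1)"
proof -
  obtain a b where a: "k = Suc a" and b: "j = Suc b" using assms by (cases k; cases j) auto
  show ?thesis unfolding a b by (simp add: power_add)
qed

lemma sign_sq: "(-1::complex)^n * (-1)^n = 1"
  by (simp add: power_add[symmetric] power_mult_distrib[symmetric] flip: power_add)

lemma identI:
  assumes k2: "k \<ge> 2" and hkP: "hk k \<Phi>" and sol: "solves_sys k \<Phi>" and j: "j \<in> {1..k-1}"
  shows "\<forall>s. \<forall>i\<in>{1..k}. pderiv_s j (\<lambda>s. matpow_vec k (companion k s) m (\<Phi> s)) s i =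
      (-1)^(k+j) * pderiv_s k (\<lambda>s. matpow_vec k (companion k s) (m + (k-j)) (\<Phi> s)) s i"
proof (induction m)
  case 0
  show ?case
  proof (intro allI ballI)
    fix s i assume i: "i \<in> {1..k}"
    have "(-1)^(k+j) * pderiv_s j \<Phi> s i = pderiv_s k (\<lambda>s'. matpow_vec k (companion k s') (k-j) (\<Phi> s')) s i"
      using sol j i unfolding solves_sys_def by blast
    then have "(-1)^(k+j) * ((-1)^(k+j) * pderiv_s j \<Phi> s i) = (-1)^(k+j) * pderiv_s k (\<lambda>s'. matpow_vec k (companion k s') (k-j) (\<Phi> s')) s i"
      by simp
    then show "pderiv_s j (\<lambda>s. matpow_vec k (companion k s) 0 (\<Phi> s)) s i =
      (-1)^(k+j) * pderiv_s k (\<lambda>s. matpow_vec k (companion k s) (0 + (k-j)) (\<Phi> s)) s i"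
      by (simp add: matpow_0 mult.assoc[symmetric] sign_sq)
  qed
next
  case (Suc m)
  show ?case
  proof (intro allI ballI)
    fix s i assume i: "i \<in> {1..k}"
    define G where "G = (\<lambda>s. matpow_vec k (companion k s) m (\<Phi> s))"
    define H where "H = (\<lambda>s. matpow_vec k (companion k s) (m + (k-j)) (\<Phi> s))"
    have hG: "hk k G" unfolding G_def by (rule hk_matpow[OF k2 hkP])
    have hH: "hk k H" unfolding H_def by (rule hk_matpow[OF k2 hkP])
    have jk: "j \<in> {1..k}" "k \<in> {1..k}" using j k2 by auto
    have L: "pderiv_s j (\<lambda>s. matpow_vec k (companion k s) (Suc m) (\<Phi> s)) s i =
      (if i = k then (-1)^(j-1) * G s (k+1-j) else 0) + matvec k (companion k s) (pderiv_s j G s) i"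
      using pderiv_matvec[OF k2 jk(1) hG, of s i] by (simp add: matpow_Suc G_def)
    have R: "pderiv_s k (\<lambda>s. matpow_vec k (companion k s) (Suc m + (k-j)) (\<Phi> s)) s i =
      (if i = k then (-1)^(k-1) * H s 1 else 0) + matvec k (companion k s) (pderiv_s k H s) i"
      using pderiv_matvec[OF k2 jk(2) hH, of s i] by (simp add: matpow_Suc H_def)
    have H1: "H s 1 = G s (k+1-j)"
    proof -
      have "H s 1 = matpow_vec k (companion k s) (k-j) (G s) 1"
        unfolding H_def G_def by (simp add: matpow_add[symmetric] add.commute)
      also have "\<dots> = G s (1 + (k-j))" using j k2 by (intro matpow_shift) auto
      moreover have "Suc k - j = Suc (k - j)" using j by (intro Suc_diff_le) auto
      ultimately show ?thesis by simp
    qed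
    have M: "matvec k (companion k s) (pderiv_s j G s) i = (-1)^(k+j) * matvec k (companion k s) (pderiv_s k H s) i"
    proof -
      have "matvec k (companion k s) (pderiv_s j G s) = matvec k (companion k s) (\<lambda>l. (-1)^(k+j) * pderiv_s k H s l)"
        using Suc.IH unfolding G_def H_def by (intro matvec_cong) auto
      then show ?thesis by (simp add: matvec_def sum_distrib_left mult.left_commute)
    qed
    show "pderiv_s j (\<lambda>s. matpow_vec k (companion k s) (Suc m) (\<Phi> s)) s i =
      (-1)^(k+j) * pderiv_s k (\<lambda>s. matpow_vec k (companion k s) (Suc m + (k-j)) (\<Phi> s)) s i"
      unfolding L R M H1 using sign_lemma[OF k2, of j] j
      by (auto simp: distrib_left mult.assoc[symmetric])
  qed
qed


definition cpd :: "real \<Rightarrow> real \<Rightarrow> complex" where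
  "cpd r t = 2 * pi * \<i> * r * exp (2 * of_real pi * \<i> * of_real t)"

lemma cpd_cont: "continuous_on S (\<lambda>t. cpd r t)"
  unfolding cpd_def by (intro continuous_intros)

lemma circle_integral_eq:
  "contour_integral (circlepath c r) F = integral {0..1} (\<lambda>t. F (circlepath c r t) * cpd r t)"
  unfolding contour_integral_integral vector_derivative_circlepath cpd_def by simp

lemma circlepath_cont: "continuous_on S (\<lambda>t. circlepath c r t)"
  unfolding circlepath by (intro continuous_intros)

lemma cont_pair_circ: "continuous_on S (\<lambda>p::('a::topological_space \<times> real). (fst p, circlepath c r (snd p)))"
  by (intro continuous_on_Pair continuous_on_fst continuous_on_compose2[OF circlepath_cont continuous_on_snd]) auto

lemma circ_leibniz:
  fixes F F' :: "complex \<Rightarrow> complex \<Rightarrow> complex"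
  assumes U: "open U" "convex U" "x0 \<in> U"
    and D: "\<And>x t. x \<in> U \<Longrightarrow> t \<in> {0..1} \<Longrightarrow>
       ((\<lambda>x. F x (circlepath c r t)) has_field_derivative F' x (circlepath c r t)) (at x)"
    and C: "continuous_on (U \<times> {0..1}) (\<lambda>(x,t). F x (circlepath c r t))"
    and C': "continuous_on (U \<times> {0..1}) (\<lambda>(x,t). F' x (circlepath c r t))"
  shows "((\<lambda>x. contour_integral (circlepath c r) (F x)) has_field_derivative
           contour_integral (circlepath c r) (F' x0)) (at x0)"
proof -
  have "((\<lambda>x. integral (cbox 0 1) (\<lambda>t. F x (circlepath c r t) * cpd r t)) has_field_derivative
        integral (cbox 0 (1::real)) (\<lambda>t. F' x0 (circlepath c r t) * cpd r t)) (at x0 within U)"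
  proof (rule leibniz_rule_field_derivative)
    fix x t assume x: "x \<in> U" and t: "t \<in> cbox 0 (1::real)"
    show "((\<lambda>x. F x (circlepath c r t) * cpd r t) has_field_derivative F' x (circlepath c r t) * cpd r t) (at x within U)"
      using D[OF x, of t] t by (intro DERIV_cmult_right) (auto simp: cbox_interval intro: has_field_derivative_at_within)
  next
    fix x assume x: "x \<in> U"
    have p: "continuous_on {0..1} (\<lambda>t::real. (x, t))" by (intro continuous_intros)
    have "continuous_on {0..1} (\<lambda>t. (\<lambda>(x,t). F x (circlepath c r t)) ((\<lambda>t. (x,t)) t))"
      by (rule continuous_on_compose2[OF C p]) (use x in auto)
    then have "continuous_on {0..1} (\<lambda>t. F x (circlepath c r t))" by simp
    then show "(\<lambda>t. F x (circlepath c r t) * cpd r t) integrable_on cbox 0 1"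
      unfolding cbox_interval by (intro integrable_continuous_interval continuous_on_mult cpd_cont)
  next
    show "continuous_on (U \<times> cbox 0 1) (\<lambda>(x, t). F' x (circlepath c r t) * cpd r t)"
    proof -
      have cc: "continuous_on (U \<times> {0..1}) (\<lambda>p. cpd r (snd p))"
        using continuous_on_compose2[OF cpd_cont continuous_on_snd[OF continuous_on_id], of "U \<times> {0..1}" UNIV] by simp
      show ?thesis unfolding cbox_interval
        using continuous_on_mult[OF C' cc] by (simp add: split_beta)
    qed
  qed (use U in auto)
  then have "((\<lambda>x. integral (cbox 0 1) (\<lambda>t. F x (circlepath c r t) * cpd r t)) has_field_derivative
        integral (cbox 0 (1::real)) (\<lambda>t. F' x0 (circlepath c r t) * cpd r t)) (at x0)"
    by (simp only: at_within_open[OF U(3) U(1)])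
  then show ?thesis
    by (simp only: circle_integral_eq cbox_interval)
qed


lemma circ_cont:
  fixes F :: "'a::topological_space \<Rightarrow> complex \<Rightarrow> complex"
  assumes C: "continuous_on (U \<times> {0..1}) (\<lambda>(x,t). F x (circlepath (c x) r t))"
  shows "continuous_on U (\<lambda>x. contour_integral (circlepath (c x) r) (F x))"
proof -
  have cc: "continuous_on (U \<times> {0..1}) (\<lambda>p. cpd r (snd p))"
    using continuous_on_compose2[OF cpd_cont continuous_on_snd[OF continuous_on_id], of "U \<times> {0..1}" UNIV] by simp
  have "continuous_on (U \<times> cbox 0 1) (\<lambda>(x, t). F x (circlepath (c x) r t) * cpd r t)"
    unfolding cbox_interval using continuous_on_mult[OF C cc] by (simp add: split_beta)
  from integral_continuous_on_param[OF this] show ?thesis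
    by (simp only: circle_integral_eq cbox_interval)
qed

lemma cauchy_deriv:
  assumes "f holomorphic_on UNIV"
  shows "deriv f v = contour_integral (circlepath v 1) (\<lambda>w. f w / (w - v)^2) / (2 * pi * \<i>)"
proof -
  have "((\<lambda>w. f w / (w - v) ^ Suc 1) has_contour_integral (2 * pi * \<i>) / fact 1 * (deriv ^^ 1) f v) (circlepath v 1)"
    using assms by (intro Cauchy_has_contour_integral_higher_derivative_circlepath)
      (auto intro: holomorphic_on_imp_continuous_on holomorphic_on_subset)
  from contour_integral_unique[OF this] show ?thesis by (simp add: power2_eq_square)
qed

lemma circlepath_minus: "circlepath v 1 t - v = exp (2 * of_real pi * \<i> * of_real t)"
  by (simp add: circlepath)


lemma deriv_cont2:
  fixes F :: "complex \<Rightarrow> complex \<Rightarrow> complex"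
  assumes C: "continuous_on UNIV (\<lambda>(u,v). F u v)" and H: "\<And>u. (F u) holomorphic_on UNIV"
  shows "continuous_on UNIV (\<lambda>(u,v). deriv (F u) v)"
proof -
  have eq: "(\<lambda>(u,v). deriv (F u) v) = (\<lambda>x. contour_integral (circlepath (snd x) 1) (\<lambda>w. F (fst x) w / (w - snd x)^2) / (2 * pi * \<i>))"
    using cauchy_deriv[OF H] by (auto simp: fun_eq_iff)
  have m: "continuous_on (UNIV \<times> {0..1}) (\<lambda>p::(complex \<times> complex) \<times> real. (fst (fst p), snd (fst p) + exp (2 * of_real pi * \<i> * of_real (snd p))))"
    by (intro continuous_intros)
  have c1: "continuous_on (UNIV \<times> {0..1}) (\<lambda>p. (\<lambda>(u,v). F u v) ((\<lambda>p::(complex \<times> complex) \<times> real. (fst (fst p), snd (fst p) + exp (2 * of_real pi * \<i> * of_real (snd p)))) p))"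
    by (rule continuous_on_compose2[OF C m]) simp
  have c2: "continuous_on (UNIV \<times> {0..1}) (\<lambda>p::(complex \<times> complex) \<times> real. (exp (2 * of_real pi * \<i> * of_real (snd p)))^2)"
    by (intro continuous_intros)
  have "continuous_on (UNIV \<times> {0..1}) (\<lambda>(x,t). F (fst x) (circlepath (snd x) 1 t) / (circlepath (snd x) 1 t - snd x)^2)"
    using continuous_on_divide[OF c1 c2] by (simp add: split_beta circlepath_minus circlepath)
  then have "continuous_on UNIV (\<lambda>x. contour_integral (circlepath (snd x) 1) (\<lambda>w. F (fst x) w / (w - snd x)^2))"
    by (intro circ_cont[where F="\<lambda>x w. F (fst x) w / (w - snd x)^2"]) simp
  then show ?thesis unfolding eq by (intro continuous_on_divide continuous_on_const) auto
qed


lemma comm2: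
  fixes g q :: "complex \<Rightarrow> complex \<Rightarrow> complex"
  assumes Cg: "continuous_on UNIV (\<lambda>(u,v). g u v)"
   and Dg: "\<And>u v. ((\<lambda>u. g u v) has_field_derivative q u v) (at u)"
   and Hg: "\<And>u. (g u) holomorphic_on UNIV"
   and Cq: "continuous_on UNIV (\<lambda>(u,v). q u v)"
   and Hq: "\<And>u. (q u) holomorphic_on UNIV"
  shows "((\<lambda>u. deriv (g u) v0) has_field_derivative deriv (q u0) v0) (at u0)"
proof -
  have c2: "continuous_on (UNIV \<times> {0..1}) (\<lambda>p::complex \<times> real. (exp (2 * of_real pi * \<i> * of_real (snd p)))^2)"
    by (intro continuous_intros)
  have c1: "continuous_on (UNIV \<times> {0..1}) (\<lambda>p. (\<lambda>(u,v). g u v) (fst p, circlepath v0 1 (snd p)))"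
    by (rule continuous_on_compose2[OF Cg cont_pair_circ]) auto
  have c1': "continuous_on (UNIV \<times> {0..1}) (\<lambda>p. (\<lambda>(u,v). q u v) (fst p, circlepath v0 1 (snd p)))"
    by (rule continuous_on_compose2[OF Cq cont_pair_circ]) auto
  have "((\<lambda>u. contour_integral (circlepath v0 1) (\<lambda>w. g u w / (w - v0)^2)) has_field_derivative
         contour_integral (circlepath v0 1) (\<lambda>w. q u0 w / (w - v0)^2)) (at u0)"
  proof (rule circ_leibniz[where F="\<lambda>u w. g u w / (w - v0)^2" and F'="\<lambda>u w. q u w / (w - v0)^2"])
    fix x t
    show "((\<lambda>x. g x (circlepath v0 1 t) / (circlepath v0 1 t - v0)\<^sup>2) has_field_derivative
          q x (circlepath v0 1 t) / (circlepath v0 1 t - v0)\<^sup>2) (at x)"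
      by (rule DERIV_cdivide[OF Dg])
  next
    show "continuous_on (UNIV \<times> {0..1}) (\<lambda>(x, t). g x (circlepath v0 1 t) / (circlepath v0 1 t - v0)\<^sup>2)"
      using continuous_on_divide[OF c1 c2] by (simp add: split_beta circlepath_minus)
    show "continuous_on (UNIV \<times> {0..1}) (\<lambda>(x, t). q x (circlepath v0 1 t) / (circlepath v0 1 t - v0)\<^sup>2)"
      using continuous_on_divide[OF c1' c2] by (simp add: split_beta circlepath_minus)
  qed auto
  then have "((\<lambda>u. contour_integral (circlepath v0 1) (\<lambda>w. g u w / (w - v0)^2) / (2 * pi * \<i>)) has_field_derivative
         contour_integral (circlepath v0 1) (\<lambda>w. q u0 w / (w - v0)^2) / (2 * pi * \<i>)) (at u0)"
    by (rule DERIV_cdivide)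
  then show ?thesis using cauchy_deriv[OF Hg] cauchy_deriv[OF Hq] by simp
qed


lemma holo_k_hk: "holo_k k \<Phi> \<Longrightarrow> hk k \<Phi>"
  unfolding holo_k_def hk_def by blast

lemma sign3: "(-1::complex)^(h+j) * ((-1)^(k+h) * ((-1)^(k+j) * X)) = X"
proof -
  have "(-1::complex)^(h+j) * ((-1)^(k+h) * ((-1)^(k+j) * X)) = (-1)^(h+j+(k+h)+(k+j)) * X"
    by (simp add: power_add)
  also have "h+j+(k+h)+(k+j) = 2*(h+j+k)" by simp
  finally show ?thesis by (simp add: power_mult)
qed

lemma part3:
  assumes k2: "k \<ge> 2" and hol: "holo_k k \<Phi>" and sol: "solves_sys k \<Phi>"
  shows "holo_k k (\<lambda>s. matvec k (companion k s) (\<Phi> s)) \<and> solves_sys k (\<lambda>s. matvec k (companion k s) (\<Phi> s))"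
proof
  have hP: "hk k \<Phi>" using hol by (rule holo_k_hk)
  have hA: "hk k (\<lambda>s. matvec k (companion k s) (\<Phi> s))" by (rule hk_matvec[OF k2 hP])
  show "holo_k k (\<lambda>s. matvec k (companion k s) (\<Phi> s))"
    unfolding holo_k_def
  proof (intro conjI)
    show "\<forall>s s'. (\<forall>i\<in>{1..k}. s i = s' i) \<longrightarrow>
      (\<forall>i\<in>{1..k}. matvec k (companion k s) (\<Phi> s) i = matvec k (companion k s') (\<Phi> s') i)"
    proof (intro allI impI ballI)
      fix s s' :: "nat \<Rightarrow> complex" and i assume eq: "\<forall>i\<in>{1..k}. s i = s' i" and i: "i \<in> {1..k}"
      have P: "\<Phi> s j = \<Phi> s' j" if "j \<in> {1..k}" for j
        using hol eq that unfolding holo_k_def by blast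
      have A: "companion k s i j = companion k s' i j" if "j \<in> {1..k}" for j
      proof -
        have "k+1-j \<in> {1..k}" using that by auto
        then have "s (k+1-j) = s' (k+1-j)" using eq by blast
        then show ?thesis unfolding companion_def by simp
      qed
      show "matvec k (companion k s) (\<Phi> s) i = matvec k (companion k s') (\<Phi> s') i"
        unfolding matvec_def using P A by (intro sum.cong) auto
    qed
  qed (use hA in \<open>auto simp: hk_def\<close>)
  show "solves_sys k (\<lambda>s. matvec k (companion k s) (\<Phi> s))"
    unfolding solves_sys_def
  proof (intro allI ballI)
    fix s h i assume h: "h \<in> {1..k-1}" and i: "i \<in> {1..k}"
    have I: "pderiv_s h (\<lambda>s. matpow_vec k (companion k s) 1 (\<Phi> s)) s i =
      (-1)^(k+h) * pderiv_s k (\<lambda>s. matpow_vec k (companion k s) (1 + (k-h)) (\<Phi> s)) s i"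
      using identI[OF k2 hP sol h, of 1] i by blast
    have e1: "(\<lambda>s. matpow_vec k (companion k s) 1 (\<Phi> s)) = (\<lambda>s. matvec k (companion k s) (\<Phi> s))"
      by (simp add: matpow_vec_def)
    have e2: "(\<lambda>s. matpow_vec k (companion k s) (1 + (k-h)) (\<Phi> s)) =
       (\<lambda>s'. matpow_vec k (companion k s') (k-h) (matvec k (companion k s') (\<Phi> s')))"
      by (simp add: matpow_vec_def funpow_swap1)
    show "(-1)^(k+h) * pderiv_s h (\<lambda>s. matvec k (companion k s) (\<Phi> s)) s i =
       pderiv_s k (\<lambda>s'. matpow_vec k (companion k s') (k-h) (matvec k (companion k s') (\<Phi> s'))) s i"
      using I unfolding e1 e2 by (simp add: mult.assoc[symmetric] sign_sq)
  qed
qed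

lemma cont_upd2:
  fixes G :: "(nat \<Rightarrow> complex) \<Rightarrow> nat \<Rightarrow> complex" and s :: "nat \<Rightarrow> complex"
  assumes "continuous_on UNIV (\<lambda>s. G s i)"
  shows "continuous_on UNIV (\<lambda>(u,v). G (s(j:=u, k:=v)) i)"
proof -
  have m: "continuous_on UNIV (\<lambda>p::complex \<times> complex. s(j := fst p, k := snd p))"
  proof (rule continuous_on_coordinatewise_then_product)
    fix l
    show "continuous_on UNIV (\<lambda>p::complex \<times> complex. (s(j := fst p, k := snd p)) l)"
      by (cases "l = k"; cases "l = j") (auto intro: continuous_intros)
  qed
  have "continuous_on UNIV (\<lambda>p. (\<lambda>s. G s i) ((\<lambda>p::complex \<times> complex. s(j := fst p, k := snd p)) p))"
    by (rule continuous_on_compose2[OF assms m]) auto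
  then show ?thesis by (simp add: split_beta)
qed

lemma part2:
  assumes k2: "k \<ge> 2" and hol: "holo_k k \<Phi>" and sol: "solves_sys k \<Phi>"
    and h: "h \<in> {1..k-1}" and j: "j \<in> {1..k-1}" and i: "i \<in> {1..k}"
  shows "(-1)^(h+j) * pderiv_s j (pderiv_s h \<Phi>) s i =
    pderiv_s k (pderiv_s k (\<lambda>s'. matpow_vec k (companion k s') (2*k-h-j) (\<Phi> s'))) s i"
proof -
  have hP: "hk k \<Phi>" using hol by (rule holo_k_hk)
  define G where "G = (\<lambda>s. matpow_vec k (companion k s) (k-h) (\<Phi> s))"
  define H where "H = (\<lambda>s. matpow_vec k (companion k s) ((k-h) + (k-j)) (\<Phi> s))"
  have hG: "hk k G" unfolding G_def by (rule hk_matpow[OF k2 hP])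
  have hH: "hk k H" unfolding H_def by (rule hk_matpow[OF k2 hP])
  have jk: "j \<noteq> k" "j \<in> {1..k}" "k \<in> {1..k}" using j k2 by auto
  have IDh: "pderiv_s h \<Phi> s' i = (-1)^(k+h) * pderiv_s k G s' i" for s'
    using identI[OF k2 hP sol h, of 0] i unfolding G_def by (simp add: matpow_0)
  have IDj: "pderiv_s j G s' i = (-1)^(k+j) * pderiv_s k H s' i" for s'
    using identI[OF k2 hP sol j, of "k-h"] i unfolding G_def H_def by blast
  define g where "g = (\<lambda>u v. G (s(j:=u, k:=v)) i)"
  define hh where "hh = (\<lambda>u v. H (s(j:=u, k:=v)) i)"
  define q where "q = (\<lambda>u v. (-1)^(k+j) * deriv (hh u) v)"
  have upd: "s(j:=u, k:=v, j:=t) = s(j:=t, k:=v)" for u v t using jk by (simp add: fun_upd_twist)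
  have upd2: "s(k:=v, j:=t) = s(j:=t, k:=v)" for v t using jk by (simp add: fun_upd_twist)
  have Hhh: "hh u holomorphic_on UNIV" for u
  proof -
    have "(\<lambda>t. H ((s(j:=u))(k:=t)) i) holomorphic_on UNIV" using hH jk i unfolding hk_def by blast
    then show ?thesis by (simp add: hh_def)
  qed
  have Hg: "g u holomorphic_on UNIV" for u
  proof -
    have "(\<lambda>t. G ((s(j:=u))(k:=t)) i) holomorphic_on UNIV" using hG jk i unfolding hk_def by blast
    then show ?thesis by (simp add: g_def)
  qed
  have Cg: "continuous_on UNIV (\<lambda>(u,v). g u v)"
    unfolding g_def by (rule cont_upd2) (use hG i in \<open>auto simp: hk_def\<close>)
  have Chh: "continuous_on UNIV (\<lambda>(u,v). hh u v)"
    unfolding hh_def by (rule cont_upd2) (use hH i in \<open>auto simp: hk_def\<close>)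
  have qeq: "q u v = pderiv_s j G (s(j:=u, k:=v)) i" for u v
  proof -
    have "pderiv_s k H (s(j:=u,k:=v)) i = deriv (hh u) v" by (simp add: pderiv_s_def hh_def)
    then show ?thesis using IDj[of "s(j:=u,k:=v)"] by (simp add: q_def)
  qed
  have Dg: "((\<lambda>u. g u v) has_field_derivative q u v) (at u)" for u v
  proof -
    have hol1: "(\<lambda>t. G ((s(k:=v))(j:=t)) i) holomorphic_on UNIV"
      using hG jk i unfolding hk_def by blast
    have "((\<lambda>t. G (s(k:=v, j:=t)) i) has_field_derivative deriv (\<lambda>t. G (s(k:=v, j:=t)) i) u) (at u)"
      by (rule holomorphic_derivI[OF hol1]) auto
    then show ?thesis
      unfolding qeq pderiv_s_def g_def upd upd2 using jk by simp
  qed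
  have Cq: "continuous_on UNIV (\<lambda>(u,v). q u v)"
  proof -
    have "continuous_on UNIV (\<lambda>(u,v). deriv (hh u) v)" by (rule deriv_cont2[OF Chh Hhh])
    then have "continuous_on UNIV (\<lambda>p. (-1)^(k+j) * (\<lambda>(u,v). deriv (hh u) v) p)"
      by (intro continuous_intros)
    then show ?thesis unfolding q_def by (simp add: split_beta)
  qed
  have Hq: "q u holomorphic_on UNIV" for u
    unfolding q_def by (intro holomorphic_intros holomorphic_deriv[OF Hhh]) auto
  have D1: "((\<lambda>u. deriv (g u) (s k)) has_field_derivative deriv (q (s j)) (s k)) (at (s j))"
    by (rule comm2[OF Cg Dg Hg Cq Hq])
  have e1: "deriv (g u) (s k) = pderiv_s k G (s(j:=u)) i" for u
    unfolding g_def pderiv_s_def using jk by simp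
  have e2: "deriv (q (s j)) (s k) = pderiv_s k (pderiv_s j G) s i"
  proof -
    have "q (s j) = (\<lambda>v. pderiv_s j G (s(k:=v)) i)"
      using qeq by (auto simp: fun_eq_iff)
    then show ?thesis by (simp add: pderiv_s_def)
  qed
  have D2: "((\<lambda>u. pderiv_s h \<Phi> (s(j:=u)) i) has_field_derivative
       (-1)^(k+h) * pderiv_s k (pderiv_s j G) s i) (at (s j))"
    unfolding IDh using DERIV_cmult[OF D1[unfolded e1 e2], of "(-1)^(k+h)"] by simp
  have L: "pderiv_s j (pderiv_s h \<Phi>) s i = (-1)^(k+h) * pderiv_s k (pderiv_s j G) s i"
    unfolding pderiv_s_def[of j "pderiv_s h \<Phi>"] using DERIV_imp_deriv[OF D2] by simp
  have M: "pderiv_s k (pderiv_s j G) s i = (-1)^(k+j) * pderiv_s k (pderiv_s k H) s i"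
  proof -
    have fd: "(\<lambda>t. pderiv_s k H (s(k:=t)) i) field_differentiable at (s k)"
    proof -
      have hol1: "(\<lambda>t. H (s(k:=t)) i) holomorphic_on UNIV" using hH jk i unfolding hk_def by blast
      have "(\<lambda>t. pderiv_s k H (s(k:=t)) i) = deriv (\<lambda>t. H (s(k:=t)) i)"
        by (simp add: pderiv_s_def fun_eq_iff)
      then show ?thesis
        using holomorphic_deriv[OF hol1] by (auto simp: holomorphic_on_def field_differentiable_at_within
              intro: holomorphic_on_imp_differentiable_at[of _ UNIV])
    qed
    have "pderiv_s k (pderiv_s j G) s i = deriv (\<lambda>t. (-1)^(k+j) * pderiv_s k H (s(k:=t)) i) (s k)"
      unfolding pderiv_s_def[of k "pderiv_s j G"] IDj by simp
    also have "\<dots> = (-1)^(k+j) * deriv (\<lambda>t. pderiv_s k H (s(k:=t)) i) (s k)"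
      by (rule deriv_cmult[OF fd])
    finally show ?thesis by (simp add: pderiv_s_def[of k "pderiv_s k H"])
  qed
  have ex: "(k-h) + (k-j) = 2*k-h-j" using h j by auto
  show ?thesis
    unfolding L M using sign3[of h j k] unfolding H_def ex by simp
qed


lemma Ps_alt: "Ps k s z = z^k + (\<Sum>h=1..k. (-1)^h * s h * z^(k-h))"
proof -
  have "Ps k s z = (-1)^0 * coeffs_s s 0 * z^(k-0) + (\<Sum>h=Suc 0..k. (-1)^h * coeffs_s s h * z^(k-h))"
    unfolding Ps_def by (rule sum.atLeast_Suc_atMost) simp
  also have "(\<Sum>h=Suc 0..k. (-1)^h * coeffs_s s h * z^(k-h)) = (\<Sum>h=1..k. (-1)^h * s h * z^(k-h))"
    by (intro sum.cong) (auto simp: coeffs_s_def)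
  finally show ?thesis by (simp add: coeffs_s_def)
qed

lemma radius_ge1: "radius_s k s \<ge> 1"
  unfolding radius_s_def by (simp add: sum_nonneg)

lemma Ps_nz:
  assumes k: "k \<ge> 1" and z: "radius_s k s \<le> cmod z"
  shows "Ps k s z \<noteq> 0"
proof
  assume P0: "Ps k s z = 0"
  define S where "S = (\<Sum>h=1..k. cmod (s h))"
  have S0: "S \<ge> 0" unfolding S_def by (intro sum_nonneg) auto
  have zS: "cmod z \<ge> 1 + S" using z unfolding radius_s_def S_def .
  have z1: "cmod z \<ge> 1" using zS S0 by linarith
  have "z^k = - (\<Sum>h=1..k. (-1)^h * s h * z^(k-h))" using P0 unfolding Ps_alt
    by (simp add: eq_neg_iff_add_eq_0)
  then have "cmod z ^ k = cmod (\<Sum>h=1..k. (-1)^h * s h * z^(k-h))" by (metis norm_minus_cancel norm_power)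
  also have "\<dots> \<le> (\<Sum>h=1..k. cmod (s h) * cmod z ^ (k-h))"
    by (rule order_trans[OF norm_sum]) (simp add: norm_mult norm_power)
  also have "\<dots> \<le> (\<Sum>h=1..k. cmod (s h) * cmod z ^ (k-1))"
    by (intro sum_mono mult_left_mono power_increasing z1) auto
  also have "\<dots> = S * cmod z ^ (k-1)" unfolding S_def by (simp add: sum_distrib_right)
  also have "\<dots> < cmod z * cmod z ^ (k-1)"
  proof (rule mult_strict_right_mono)
    show "S < cmod z" using zS by linarith
    show "0 < cmod z ^ (k-1)" using z1 by (intro zero_less_power) linarith
  qed
  also have "\<dots> = cmod z ^ k" using k by (cases k) auto
  finally show False by simp
qed

lemma Ps_upd:
  assumes h: "h \<in> {1..k}"
  shows "Ps k (s(h:=t)) z = Ps k s z + ((-1)^h * z^(k-h)) * (t - s h)"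
proof -
  have "(\<Sum>l=1..k. (-1)^l * (s(h:=t)) l * z^(k-l)) =
     (\<Sum>l=1..k. (-1)^l * s l * z^(k-l) + (if l = h then ((-1)^h * z^(k-h)) * (t - s h) else 0))"
    by (intro sum.cong) (auto simp: algebra_simps)
  also have "\<dots> = (\<Sum>l=1..k. (-1)^l * s l * z^(k-l)) + ((-1)^h * z^(k-h)) * (t - s h)"
    using h by (simp add: sum.distrib)
  finally show ?thesis unfolding Ps_alt by simp
qed

lemma radius_upd:
  assumes h: "h \<in> {1..k}"
  shows "radius_s k (s(h:=t)) \<le> radius_s k s + cmod (t - s h)"
proof -
  have "(\<Sum>l=1..k. cmod ((s(h:=t)) l)) \<le> (\<Sum>l=1..k. cmod (s l) + (if l = h then cmod (t - s h) else 0))"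
  proof (intro sum_mono)
    fix l show "cmod ((s(h:=t)) l) \<le> cmod (s l) + (if l = h then cmod (t - s h) else 0)"
      using norm_triangle_ineq[of "s h" "t - s h"] by auto
  qed
  also have "\<dots> = (\<Sum>l=1..k. cmod (s l)) + cmod (t - s h)" using h by (simp add: sum.distrib)
  finally show ?thesis unfolding radius_s_def by simp
qed

lemma Ps_fun: "Ps k s = (\<lambda>z. \<Sum>h=0..k. (-1)^h * coeffs_s s h * z^(k-h))"
  by (simp add: fun_eq_iff Ps_def)

lemma Ps_holo: "Ps k s holomorphic_on A"
  unfolding Ps_fun by (intro holomorphic_intros)

lemma Ps_cont: "continuous_on A (Ps k s)"
  unfolding Ps_fun by (intro continuous_intros)

lemma norm_circlepath0: "R \<ge> 0 \<Longrightarrow> cmod (circlepath 0 R t) = R"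
proof -
  assume R: "R \<ge> 0"
  have "exp (2 * of_real pi * \<i> * of_real t) = exp (\<i> * of_real (2 * pi * t))"
    by (simp add: algebra_simps)
  then have "cmod (exp (2 * of_real pi * \<i> * of_real t)) = 1" by simp
  then show ?thesis using R by (simp add: circlepath norm_mult)
qed

lemma circ_indep:
  assumes k: "k \<ge> 1" and g: "g holomorphic_on UNIV" and R1: "radius_s k s \<le> R1" and R2: "R1 \<le> R2"
  shows "contour_integral (circlepath 0 R1) (\<lambda>\<zeta>. g \<zeta> / Ps k s \<zeta>) =
         contour_integral (circlepath 0 R2) (\<lambda>\<zeta>. g \<zeta> / Ps k s \<zeta>)"
proof -
  define S where "S = {z. Ps k s z \<noteq> 0}"
  have oS: "open S" unfolding S_def by (rule open_Collect_neq[OF Ps_cont continuous_on_const])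
  have hS: "(\<lambda>\<zeta>. g \<zeta> / Ps k s \<zeta>) holomorphic_on S"
    unfolding S_def by (intro holomorphic_on_divide holomorphic_on_subset[OF g] Ps_holo) auto
  have r1: "R1 \<ge> 1" using R1 radius_ge1[of k s] by linarith
  have hom: "homotopic_loops S (circlepath 0 R1) (circlepath 0 R2)"
  proof (rule homotopic_loops_linear)
    fix t :: real assume t: "t \<in> {0..1}"
    show "closed_segment (circlepath 0 R1 t) (circlepath 0 R2 t) \<subseteq> S"
    proof
      fix y assume "y \<in> closed_segment (circlepath 0 R1 t) (circlepath 0 R2 t)"
      then obtain u where u: "0 \<le> u" "u \<le> 1" and y: "y = (1 - u) *\<^sub>R circlepath 0 R1 t + u *\<^sub>R circlepath 0 R2 t"
        unfolding closed_segment_def by auto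
      define e where "e = exp (2 * of_real pi * \<i> * of_real t)"
      have ne: "cmod e = 1" using norm_circlepath0[of 1 t] unfolding e_def by (simp add: circlepath)
      define A where "A = (1-u)*R1 + u*R2"
      have yA: "y = of_real A * e" unfolding y circlepath e_def A_def
        by (simp add: scaleR_conv_of_real algebra_simps)
      have "u*R1 \<le> u*R2" using u R2 by (intro mult_left_mono) auto
      then have AR: "A \<ge> R1" unfolding A_def by (simp add: algebra_simps)
      have "cmod y = A" using AR r1 ne unfolding yA by (simp add: norm_mult)
      then have "cmod y \<ge> R1" using AR by simp
      then have "Ps k s y \<noteq> 0" using Ps_nz[OF k] R1 by simp
      then show "y \<in> S" unfolding S_def by simp
    qed
  qed auto
  show ?thesis by (rule Cauchy_theorem_homotopic_loops[OF hom oS hS]) auto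
qed

lemma PhiF_R:
  assumes k: "k \<ge> 1" and i: "i \<in> {1..k}" and g: "g holomorphic_on UNIV" and R: "radius_s k s \<le> R"
  shows "PhiF k g s i = contour_integral (circlepath 0 R) (\<lambda>\<zeta>. g \<zeta> * \<zeta>^(i-1) / Ps k s \<zeta>) / (2 * complex_of_real pi * \<i>)"
proof -
  have "(\<lambda>\<zeta>. g \<zeta> * \<zeta>^(i-1)) holomorphic_on UNIV" by (intro holomorphic_intros g)
  from circ_indep[OF k this order_refl R] show ?thesis unfolding PhiF_def using i by simp
qed

lemma ci_int:
  assumes k: "k \<ge> 1" and g: "continuous_on UNIV g" and R: "radius_s k s \<le> R"
  shows "(\<lambda>\<zeta>. g \<zeta> / Ps k s \<zeta>) contour_integrable_on circlepath 0 R"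
proof (rule contour_integrable_continuous_circlepath)
  have R0: "R \<ge> 0" using R radius_ge1[of k s] by linarith
  show "continuous_on (path_image (circlepath 0 R)) (\<lambda>\<zeta>. g \<zeta> / Ps k s \<zeta>)"
    using R0 R Ps_nz[OF k, of s]
    by (intro continuous_on_divide continuous_on_subset[OF g] Ps_cont) auto
qed


lemma comp_row_sum:
  "(\<Sum>j=1..k. (-1)^(k-j) * s (k+1-j) * z^(j-1)) = z^k - Ps k s z"
proof -
  have "(\<Sum>j=1..k. (-1)^(k-j) * s (k+1-j) * z^(j-1)) = (\<Sum>h=1..k. - ((-1)^h * s h * z^(k-h)))"
  proof (rule sum.reindex_bij_witness[of _ "\<lambda>h. k+1-h" "\<lambda>j. k+1-j"])
    fix j assume j: "j \<in> {1..k}"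
    have e2: "k-(k+1-j) = j-1" using j by auto
    have e1: "(-1::complex)^(k+1-j) = - ((-1)^(k-j))" using j by (simp add: Suc_diff_le)
    show "- ((-1)^(k+1-j) * s (k+1-j) * z^(k-(k+1-j))) = (-1)^(k-j) * s (k+1-j) * z^(j-1)"
      unfolding e2 e1 by simp
  qed auto
  also have "\<dots> = z^k - Ps k s z" unfolding Ps_alt by (simp add: sum_negf)
  finally show ?thesis .
qed

lemma ci_cmult: "contour_integral (circlepath c r) (\<lambda>z. a * F z) = a * contour_integral (circlepath c r) F"
  unfolding circle_integral_eq by (simp add: mult.assoc)

lemma ci_cmult_div: "contour_integral (circlepath c r) (\<lambda>z. a * F z / G z) = a * contour_integral (circlepath c r) (\<lambda>z. F z / G z)"
  using ci_cmult[of c r a "\<lambda>z. F z / G z"] by simp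

lemma ci_entire_zero:
  assumes g: "g holomorphic_on UNIV"
  shows "contour_integral (circlepath 0 R) g = 0"
proof -
  have "(g has_contour_integral 0) (circlepath 0 R)"
    by (rule Cauchy_theorem_disc_simple[of g 0 "\<bar>R\<bar> + 1"]) (auto intro: holomorphic_on_subset[OF g])
  then show ?thesis by (rule contour_integral_unique)
qed

lemma matvec_PhiF:
  assumes k2: "k \<ge> 2" and g: "g holomorphic_on UNIV" and i: "i \<in> {1..k}"
  shows "matvec k (companion k s) (PhiF k g s) i = PhiF k (\<lambda>\<zeta>. \<zeta> * g \<zeta>) s i"
proof (cases "i < k")
  case True
  have "matvec k (companion k s) (PhiF k g s) i = (\<Sum>j=1..k. if j = i+1 then PhiF k g s j else 0)"
    unfolding matvec_def using True i by (intro sum.cong) (auto simp: companion_def)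
  also have "\<dots> = PhiF k g s (i+1)" using True i by (subst sum.delta) auto
  also have "\<dots> = PhiF k (\<lambda>\<zeta>. \<zeta> * g \<zeta>) s i"
  proof -
    have "(\<lambda>\<zeta>. g \<zeta> * \<zeta>^(i+1-1) / Ps k s \<zeta>) = (\<lambda>\<zeta>. \<zeta> * g \<zeta> * \<zeta>^(i-1) / Ps k s \<zeta>)"
      using i by (cases i) (auto simp: fun_eq_iff)
    then show ?thesis unfolding PhiF_def using True i by simp
  qed
  finally show ?thesis .
next
  case False
  then have ik: "i = k" using i by auto
  have k1: "k \<ge> 1" using k2 by simp
  define R where "R = radius_s k s"
  define c where "c = (\<lambda>j. (-1)^(k-j) * s (k+1-j))"
  have gc: "continuous_on UNIV g" using g by (rule holomorphic_on_imp_continuous_on)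
  have int: "(\<lambda>\<zeta>. h \<zeta> / Ps k s \<zeta>) contour_integrable_on circlepath 0 R" if "continuous_on UNIV h" for h
    using ci_int[OF k1 that] unfolding R_def by simp
  have intj: "(\<lambda>\<zeta>. g \<zeta> * \<zeta>^(j-1) / Ps k s \<zeta>) contour_integrable_on circlepath 0 R" for j
    by (rule int) (intro continuous_intros gc)
  have "matvec k (companion k s) (PhiF k g s) i = (\<Sum>j=1..k. c j * PhiF k g s j)"
    unfolding matvec_def ik c_def using k2 by (intro sum.cong) (auto simp: companion_def)
  also have "\<dots> = (\<Sum>j=1..k. contour_integral (circlepath 0 R) (\<lambda>\<zeta>. c j * (g \<zeta> * \<zeta>^(j-1)) / Ps k s \<zeta>)) / (2 * complex_of_real pi * \<i>)"
    unfolding PhiF_def R_def sum_divide_distrib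
    by (intro sum.cong refl) (simp add: ci_cmult_div)
  also have "(\<Sum>j=1..k. contour_integral (circlepath 0 R) (\<lambda>\<zeta>. c j * (g \<zeta> * \<zeta>^(j-1)) / Ps k s \<zeta>)) =
      contour_integral (circlepath 0 R) (\<lambda>\<zeta>. \<Sum>j=1..k. c j * (g \<zeta> * \<zeta>^(j-1)) / Ps k s \<zeta>)"
    by (rule contour_integral_sum[symmetric]) (auto intro!: int continuous_intros gc)
  also have "\<dots> = contour_integral (circlepath 0 R) (\<lambda>\<zeta>. g \<zeta> * \<zeta>^k / Ps k s \<zeta> - g \<zeta>)"
  proof (rule contour_integral_cong[OF refl])
    fix \<zeta> assume z: "\<zeta> \<in> path_image (circlepath 0 R)"
    have R0: "R \<ge> 0" using radius_ge1[of k s] unfolding R_def by linarith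
    have nz: "Ps k s \<zeta> \<noteq> 0" using z R0 Ps_nz[OF k1, of s \<zeta>] unfolding R_def by auto
    have "(\<Sum>j=1..k. c j * (g \<zeta> * \<zeta>^(j-1)) / Ps k s \<zeta>) = g \<zeta> / Ps k s \<zeta> * (\<Sum>j=1..k. c j * \<zeta>^(j-1))"
      by (simp add: sum_distrib_left algebra_simps)
    also have "(\<Sum>j=1..k. c j * \<zeta>^(j-1)) = \<zeta>^k - Ps k s \<zeta>"
      unfolding c_def by (rule comp_row_sum)
    finally show "(\<Sum>j=1..k. c j * (g \<zeta> * \<zeta>^(j-1)) / Ps k s \<zeta>) = g \<zeta> * \<zeta>^k / Ps k s \<zeta> - g \<zeta>"
      using nz by (simp add: field_simps)
  qed
  also have "\<dots> = contour_integral (circlepath 0 R) (\<lambda>\<zeta>. g \<zeta> * \<zeta>^k / Ps k s \<zeta>) - contour_integral (circlepath 0 R) g"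
    by (rule contour_integral_diff) (auto intro!: int continuous_intros gc contour_integrable_holomorphic_simple[OF g])
  also have "contour_integral (circlepath 0 R) g = 0" by (rule ci_entire_zero[OF g])
  finally have fin: "matvec k (companion k s) (PhiF k g s) i =
     contour_integral (circlepath 0 R) (\<lambda>\<zeta>. g \<zeta> * \<zeta>^k / Ps k s \<zeta>) / (2 * complex_of_real pi * \<i>)"
    by simp
  have fe: "(\<lambda>\<zeta>. g \<zeta> * \<zeta>^k / Ps k s \<zeta>) = (\<lambda>\<zeta>. \<zeta> * g \<zeta> * \<zeta>^(k-1) / Ps k s \<zeta>)"
    using k1 by (cases k) (auto simp: fun_eq_iff)
  show ?thesis unfolding fin fe unfolding PhiF_def R_def using ik k1 by simp
qed

lemma matpow_PhiF:
  assumes k2: "k \<ge> 2" and g: "g holomorphic_on UNIV"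
  shows "\<forall>i\<in>{1..k}. matpow_vec k (companion k s) m (PhiF k g s) i = PhiF k (\<lambda>\<zeta>. \<zeta>^m * g \<zeta>) s i"
proof (induction m)
  case 0 then show ?case by (simp add: matpow_0)
next
  case (Suc m)
  have gm: "(\<lambda>\<zeta>. \<zeta>^m * g \<zeta>) holomorphic_on UNIV" by (intro holomorphic_intros g)
  show ?case
  proof
    fix i assume i: "i \<in> {1..k}"
    have "matpow_vec k (companion k s) (Suc m) (PhiF k g s) i =
        matvec k (companion k s) (matpow_vec k (companion k s) m (PhiF k g s)) i"
      by (simp add: matpow_Suc)
    also have "\<dots> = matvec k (companion k s) (PhiF k (\<lambda>\<zeta>. \<zeta>^m * g \<zeta>) s) i"
      using Suc.IH by (subst matvec_cong[of k _ "PhiF k (\<lambda>\<zeta>. \<zeta>^m * g \<zeta>) s"]) auto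
    also have "\<dots> = PhiF k (\<lambda>\<zeta>. \<zeta> * (\<zeta>^m * g \<zeta>)) s i" by (rule matvec_PhiF[OF k2 gm i])
    finally show "matpow_vec k (companion k s) (Suc m) (PhiF k g s) i = PhiF k (\<lambda>\<zeta>. \<zeta>^Suc m * g \<zeta>) s i"
      by (simp add: mult.assoc)
  qed
qed


lemma deriv_aff_div:
  assumes "b + c * (x - x0) \<noteq> 0"
  shows "((\<lambda>x. a / (b + c * (x - x0))) has_field_derivative - c * a / (b + c * (x - x0))^2) (at x)"
proof -
  have d: "((\<lambda>x. b + c * (x - x0)) has_field_derivative c) (at x)"
    by (auto intro!: derivative_eq_intros)
  have "((\<lambda>x. a / (b + c * (x - x0))) has_field_derivative
     (0 * (b + c * (x - x0)) - a * c) / ((b + c * (x - x0)) * (b + c * (x - x0)))) (at x)"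
    by (rule DERIV_divide[OF DERIV_const d assms])
  then show ?thesis by (simp add: power2_eq_square mult.commute)
qed

lemma PhiF_deriv:
  assumes k: "k \<ge> 1" and h: "h \<in> {1..k}" and i: "i \<in> {1..k}" and g: "g holomorphic_on UNIV"
  shows "((\<lambda>t. PhiF k g (s(h:=t)) i) has_field_derivative
     contour_integral (circlepath 0 (radius_s k s + 1))
       (\<lambda>\<zeta>. - ((-1)^h * \<zeta>^(k-h)) * (g \<zeta> * \<zeta>^(i-1)) / (Ps k s \<zeta>)^2) / (2 * complex_of_real pi * \<i>)) (at (s h))"
proof -
  define R where "R = radius_s k s + 1"
  define G where "G = (\<lambda>\<zeta>. g \<zeta> * \<zeta>^(i-1))"
  define D where "D = (\<lambda>t \<zeta>. Ps k s \<zeta> + ((-1)^h * \<zeta>^(k-h)) * (t - s h))"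
  have Gh: "G holomorphic_on UNIV" unfolding G_def by (intro holomorphic_intros g)
  have Gc: "continuous_on UNIV G" using Gh by (rule holomorphic_on_imp_continuous_on)
  have Dupd: "D t \<zeta> = Ps k (s(h:=t)) \<zeta>" for t \<zeta> unfolding D_def using Ps_upd[OF h] by simp
  have R0: "R \<ge> 0" unfolding R_def using radius_ge1[of k s] by linarith
  have rad: "radius_s k (s(h:=t)) \<le> R" if "t \<in> ball (s h) 1" for t
    using radius_upd[OF h, of s t] that unfolding R_def by (auto simp: dist_norm norm_minus_commute)
  have Dnz: "D t \<zeta> \<noteq> 0" if "t \<in> ball (s h) 1" "cmod \<zeta> = R" for t \<zeta>
    unfolding Dupd using Ps_nz[OF k] rad[OF that(1)] that(2) by simp
  have eqU: "contour_integral (circlepath 0 R) (\<lambda>\<zeta>. G \<zeta> / D t \<zeta>) / (2 * complex_of_real pi * \<i>) = PhiF k g (s(h:=t)) i"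
    if "t \<in> ball (s h) 1" for t
    using PhiF_R[OF k i g rad[OF that]] unfolding Dupd G_def by simp
  have ptsR: "cmod (circlepath 0 R \<tau>) = R" for \<tau> by (rule norm_circlepath0[OF R0])
  define A where "A = ball (s h) 1 \<times> {0..(1::real)}"
  have cgam: "continuous_on A (\<lambda>p. circlepath 0 R (snd p))"
    unfolding circlepath by (intro continuous_intros)
  have c1: "continuous_on A (\<lambda>p. G (circlepath 0 R (snd p)))"
    by (rule continuous_on_compose2[OF Gc cgam]) auto
  have c2: "continuous_on A (\<lambda>p. Ps k s (circlepath 0 R (snd p)))"
    by (rule continuous_on_compose2[OF Ps_cont cgam]) auto
  have cD: "continuous_on A (\<lambda>p. D (fst p) (circlepath 0 R (snd p)))"
    unfolding D_def by (intro continuous_intros c2 cgam)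
  have nzA: "\<forall>p\<in>A. D (fst p) (circlepath 0 R (snd p)) \<noteq> 0"
    using Dnz ptsR unfolding A_def by auto
  have der: "((\<lambda>t. contour_integral (circlepath 0 R) (\<lambda>\<zeta>. G \<zeta> / D t \<zeta>)) has_field_derivative
        contour_integral (circlepath 0 R) (\<lambda>\<zeta>. - ((-1)^h * \<zeta>^(k-h)) * G \<zeta> / (D (s h) \<zeta>)^2)) (at (s h))"
  proof (rule circ_leibniz[where U="ball (s h) 1" and F="\<lambda>t \<zeta>. G \<zeta> / D t \<zeta>"
        and F'="\<lambda>t \<zeta>. - ((-1)^h * \<zeta>^(k-h)) * G \<zeta> / (D t \<zeta>)^2"])
    fix x \<tau> assume x: "x \<in> ball (s h) 1" and \<tau>: "\<tau> \<in> {0..(1::real)}"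
    have nz: "D x (circlepath 0 R \<tau>) \<noteq> 0" using Dnz[OF x ptsR] .
    show "((\<lambda>x. G (circlepath 0 R \<tau>) / D x (circlepath 0 R \<tau>)) has_field_derivative
      - ((-1)^h * (circlepath 0 R \<tau>)^(k-h)) * G (circlepath 0 R \<tau>) / (D x (circlepath 0 R \<tau>))^2) (at x)"
      using deriv_aff_div[OF nz[unfolded D_def], of "G (circlepath 0 R \<tau>)"] unfolding D_def .
  next
    show "continuous_on (ball (s h) 1 \<times> {0..1}) (\<lambda>(x, \<tau>). G (circlepath 0 R \<tau>) / D x (circlepath 0 R \<tau>))"
      using continuous_on_divide[OF c1 cD nzA] unfolding A_def by (simp add: split_beta)
    have c3: "continuous_on A (\<lambda>p. - ((-1)^h * (circlepath 0 R (snd p))^(k-h)) * G (circlepath 0 R (snd p)))"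
      by (intro continuous_intros c1 cgam)
    have c4: "continuous_on A (\<lambda>p. (D (fst p) (circlepath 0 R (snd p)))^2)"
      by (intro continuous_intros cD)
    show "continuous_on (ball (s h) 1 \<times> {0..1}) (\<lambda>(x, \<tau>). - ((-1)^h * (circlepath 0 R \<tau>)^(k-h)) * G (circlepath 0 R \<tau>) / (D x (circlepath 0 R \<tau>))^2)"
      using continuous_on_divide[OF c3 c4] nzA unfolding A_def by (simp add: split_beta)
  qed auto
  have der2: "((\<lambda>t. contour_integral (circlepath 0 R) (\<lambda>\<zeta>. G \<zeta> / D t \<zeta>) / (2 * complex_of_real pi * \<i>)) has_field_derivative
        contour_integral (circlepath 0 R) (\<lambda>\<zeta>. - ((-1)^h * \<zeta>^(k-h)) * G \<zeta> / (D (s h) \<zeta>)^2) / (2 * complex_of_real pi * \<i>)) (at (s h))"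
    by (rule DERIV_cdivide[OF der])
  have der3: "((\<lambda>t. PhiF k g (s(h:=t)) i) has_field_derivative
        contour_integral (circlepath 0 R) (\<lambda>\<zeta>. - ((-1)^h * \<zeta>^(k-h)) * G \<zeta> / (D (s h) \<zeta>)^2) / (2 * complex_of_real pi * \<i>)) (at (s h))"
    by (rule has_field_derivative_transform_within_open[OF der2, of "ball (s h) 1"]) (auto simp: eqU)
  have "(\<lambda>\<zeta>. - ((-1)^h * \<zeta>^(k-h)) * G \<zeta> / (D (s h) \<zeta>)^2) = (\<lambda>\<zeta>. - ((-1)^h * \<zeta>^(k-h)) * (g \<zeta> * \<zeta>^(i-1)) / (Ps k s \<zeta>)^2)"
    by (simp add: G_def D_def)
  with der3 show ?thesis unfolding R_def by simp
qed


lemma part1: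
  assumes k2: "k \<ge> 2" and f: "f holomorphic_on UNIV"
  shows "solves_sys k (PhiF k f)"
  unfolding solves_sys_def
proof (intro allI ballI)
  fix s h i assume h: "h \<in> {1..k-1}" and i: "i \<in> {1..k}"
  have hk: "h \<in> {1..k}" and kk: "k \<in> {1..k}" and k1: "k \<ge> 1" using h k2 by auto
  define g2 where "g2 = (\<lambda>\<zeta>. \<zeta>^(k-h) * f \<zeta>)"
  have g2h: "g2 holomorphic_on UNIV" unfolding g2_def by (intro holomorphic_intros f)
  define R where "R = radius_s k s + 1"
  define c where "c = 2 * complex_of_real pi * \<i>"
  have L: "pderiv_s h (PhiF k f) s i = contour_integral (circlepath 0 R)
       (\<lambda>\<zeta>. - ((-1)^h * \<zeta>^(k-h)) * (f \<zeta> * \<zeta>^(i-1)) / (Ps k s \<zeta>)^2) / c"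
    unfolding pderiv_s_def R_def c_def by (rule DERIV_imp_deriv[OF PhiF_deriv[OF k1 hk i f]])
  have fe: "(\<lambda>t. matpow_vec k (companion k (s(k:=t))) (k-h) (PhiF k f (s(k:=t))) i) = (\<lambda>t. PhiF k g2 (s(k:=t)) i)"
    using matpow_PhiF[OF k2 f] i unfolding g2_def by auto
  have Rr: "pderiv_s k (\<lambda>s'. matpow_vec k (companion k s') (k-h) (PhiF k f s')) s i =
     contour_integral (circlepath 0 R)
       (\<lambda>\<zeta>. - ((-1)^k * \<zeta>^(k-k)) * (g2 \<zeta> * \<zeta>^(i-1)) / (Ps k s \<zeta>)^2) / c"
    unfolding pderiv_s_def fe R_def c_def by (rule DERIV_imp_deriv[OF PhiF_deriv[OF k1 kk i g2h]])
  have e: "(-1::complex)^(k+h) = (-1)^k * (-1)^h" by (simp add: power_add)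
  have pw: "(-1::complex)^(k+h) * (- ((-1)^h * \<zeta>^(k-h)) * (f \<zeta> * \<zeta>^(i-1)) / (Ps k s \<zeta>)^2) =
     - ((-1)^k * \<zeta>^(k-k)) * (g2 \<zeta> * \<zeta>^(i-1)) / (Ps k s \<zeta>)^2" for \<zeta>
    unfolding e g2_def by (cases "even h") (simp_all add: divide_inverse algebra_simps)
  have "(-1)^(k+h) * pderiv_s h (PhiF k f) s i =
     contour_integral (circlepath 0 R) (\<lambda>\<zeta>. (-1)^(k+h) * (- ((-1)^h * \<zeta>^(k-h)) * (f \<zeta> * \<zeta>^(i-1)) / (Ps k s \<zeta>)^2)) / c"
    unfolding L ci_cmult by simp
  also have "\<dots> = pderiv_s k (\<lambda>s'. matpow_vec k (companion k s') (k-h) (PhiF k f s')) s i"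
    unfolding Rr pw ..
  finally show "(-1)^(k+h) * pderiv_s h (PhiF k f) s i =
      pderiv_s k (\<lambda>s'. matpow_vec k (companion k s') (k-h) (PhiF k f s')) s i" .
qed

theorem mainTheorem3:
  fixes k :: nat
  assumes "k \<ge> 2"
  shows "(\<forall>f. f holomorphic_on UNIV \<longrightarrow> solves_sys k (PhiF k f))
    \<and> (\<forall>\<Phi>. holo_k k \<Phi> \<and> solves_sys k \<Phi> \<longrightarrow>
         (\<forall>s. \<forall>h\<in>{1..k-1}. \<forall>j\<in>{1..k-1}. \<forall>i\<in>{1..k}.
            (-1)^(h+j) * pderiv_s j (pderiv_s h \<Phi>) s i =
            pderiv_s k (pderiv_s k (\<lambda>s'. matpow_vec k (companion k s') (2*k-h-j) (\<Phi> s'))) s i))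
    \<and> (\<forall>\<Phi>. holo_k k \<Phi> \<and> solves_sys k \<Phi> \<longrightarrow>
         holo_k k (\<lambda>s. matvec k (companion k s) (\<Phi> s)) \<and>
         solves_sys k (\<lambda>s. matvec k (companion k s) (\<Phi> s)))"
  using part1[OF assms] part2[OF assms] part3[OF assms] by blast


end
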